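(* Assume $\rho_\alpha^{\mathrm{dir}}<1$, let $\theta^\star$ be the unique projected Bellman fixed point, and let $x_k:=\theta_k-\theta^\star$. Then for each $k\ge0$ there exists an $\mathcal F_k$-measurable stochastic policy $\mu_k$ such that \[ x_{k+1}=A_{\mu_k}x_k+\alpha w_k\quad\text{for all }k\ge0, \] where $w_k:=\widehat g_k(\theta_k)-g(\theta_k)$ satisfies $\mathbb E[w_k\mid\mathcal F_k]=0$.
   Context: Consider a finite discounted MDP with state space $\mathcal S=\{1,\dots,|\mathcal S|\}$, action space $\mathcal A=\{1,\dots,|\mathcal A|\}$, transition probabilities $P(s'\mid s,a)$, real rewards $r(s,a,s')$, expected reward $R(s,a)=\sum_{s'}P(s'\mid s,a)r(s,a,s')$, and discount factor $\gamma\in(0,1)$. State-action vectors are ordered as $(1,1),(2,1),\dots,(|\mathcal S|,1),(1,2),\dots$. The matrix $P\in\mathbb R^{|\mathcal S||\mathcal A|\times|\mathcal S|}$ has rows $P(\cdot\mid s,a)$, and $R$ has entries $R(s,a)$. A stochastic policy is a map $\mu:\mathcal S\to\Delta_{|\mathcal A|}$. The matrix $\Pi^\mu\in\mathbb R^{|\mathcal S|\times|\mathcal S||\mathcal A|}$ has entry $\mu(a\mid s)$ at row $s$, column $(s,a)$, and zeros elsewhere. The set $\Theta$ is the set of deterministic stationary policies, viewed as stochastic policies. The feature matrix $\Phi\in\mathbb R^{|\mathcal S||\mathcal A|\times m}$ has full column rank and rows $\phi(s,a)^\top$. Define $V_\theta(s):=\max_a\phi(s,a)^\top\theta$. The distribution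 $d$ on $\mathcal S\times\mathcal A$ satisfies $d>0$ everywhere, and $D=\mathrm{diag}(d)$. The step size is $\alpha\in(0,1)$. Define $g(\theta):=\Phi^\top D(R+\gamma PV_\theta-\Phi\theta)$. A projected Bellman fixed point is a $\theta^\star$ with $g(\theta^\star)=0$. Define $A_\mu:=I-\alpha\Phi^\top D\Phi+\alpha\gamma\Phi^\top DP\Pi^\mu\Phi$. Let $\rho_\alpha^{\mathrm{dir}}:=\lim_k\max_{\pi_i\in\Theta}\|A_{\pi_k}\cdots A_{\pi_1}\|^{1/k}$ be the joint spectral radius of $\{A_\pi:\pi\in\Theta\}$. When $\rho_\alpha^{\mathrm{dir}}<1$ a unique projected Bellman fixed point exists. i.i.d. sampling: $\theta_0$ is deterministic. At each time $k$, $(s_k,a_k)$ is drawn independently according to $d$, then $s'_k\sim P(\cdot\mid s_k,a_k)$, and $r_{k+1}:=r(s_k,a_k,s'_k)$. The filtration is $\mathcal F_0=\sigma(\theta_0)$ and $\mathcal F_k=\sigma(\theta_0,\{(s_t,a_t,s'_t,r_{t+1}):t\le k-1\})$. Define \[ \widehat g_k(\theta):=\phi(s_k,a_k)\Big(r_{k+1}+\gamma\max_u\phi(s'_k,u)^\top\theta-\phi(s_k,a_k)^\top\theta\Big), \] and the update $\theta_{k+1}=\theta_k+\alpha\widehat g_k(\theta_k)$. *)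

theory Defs
  imports "HOL-Analysis.Analysis" "HOL-Probability.Probability"
begin

text \<open>P s a s' = P(s' | s,a); r s a s' reward; d s a the sampling distribution;
  phi s a the feature vector; a stochastic policy is mu :: 's => 'a => real
  with mu s a = mu(a | s).\<close>

definition Rexp :: "('s::finite \<Rightarrow> 'a \<Rightarrow> 's \<Rightarrow> real) \<Rightarrow> ('s \<Rightarrow> 'a \<Rightarrow> 's \<Rightarrow> real) \<Rightarrow> 's \<Rightarrow> 'a \<Rightarrow> real" where
  "Rexp P r s a = (\<Sum>s'\<in>UNIV. P s a s' * r s a s')"

definition Vtheta :: "('s \<Rightarrow> 'a::finite \<Rightarrow> real^'m) \<Rightarrow> real^'m \<Rightarrow> 's \<Rightarrow> real" where
  "Vtheta phi \<theta> s = Max ((\<lambda>a. phi s a \<bullet> \<theta>) ` UNIV)"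

text \<open>g(theta) = Phi^T D (R + gamma P V_theta - Phi theta).\<close>
definition gbar :: "('s::finite \<Rightarrow> 'a::finite \<Rightarrow> 's \<Rightarrow> real) \<Rightarrow> ('s \<Rightarrow> 'a \<Rightarrow> 's \<Rightarrow> real) \<Rightarrow> real
    \<Rightarrow> ('s \<Rightarrow> 'a \<Rightarrow> real) \<Rightarrow> ('s \<Rightarrow> 'a \<Rightarrow> real^'m) \<Rightarrow> real^'m \<Rightarrow> real^'m" where
  "gbar P r \<gamma> d phi \<theta> =
     (\<Sum>s\<in>UNIV. \<Sum>a\<in>UNIV. (d s a * (Rexp P r s a + \<gamma> * (\<Sum>s'\<in>UNIV. P s a s' * Vtheta phi \<theta> s')
        - phi s a \<bullet> \<theta>)) *\<^sub>R phi s a)"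

text \<open>A_mu = I - alpha Phi^T D Phi + alpha gamma Phi^T D P Pi^mu Phi, as a linear map.\<close>
definition Amat :: "('s::finite \<Rightarrow> 'a::finite \<Rightarrow> 's \<Rightarrow> real) \<Rightarrow> real \<Rightarrow> real
    \<Rightarrow> ('s \<Rightarrow> 'a \<Rightarrow> real) \<Rightarrow> ('s \<Rightarrow> 'a \<Rightarrow> real^'m) \<Rightarrow> ('s \<Rightarrow> 'a \<Rightarrow> real) \<Rightarrow> real^'m \<Rightarrow> real^'m" where
  "Amat P \<gamma> \<alpha> d phi mu x =
     x - \<alpha> *\<^sub>R (\<Sum>s\<in>UNIV. \<Sum>a\<in>UNIV. (d s a * (phi s a \<bullet> x)) *\<^sub>R phi s a)
       + (\<alpha> * \<gamma>) *\<^sub>R (\<Sum>s\<in>UNIV. \<Sum>a\<in>UNIV.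
            (d s a * (\<Sum>s'\<in>UNIV. P s a s' * (\<Sum>u\<in>UNIV. mu s' u * (phi s' u \<bullet> x)))) *\<^sub>R phi s a)"

definition det_policy :: "('s \<Rightarrow> 'a) \<Rightarrow> 's \<Rightarrow> 'a \<Rightarrow> real" where
  "det_policy \<pi> s a = (if a = \<pi> s then 1 else 0)"

definition stoch_policy :: "('s::finite \<Rightarrow> 'a::finite \<Rightarrow> real) \<Rightarrow> bool" where
  "stoch_policy mu \<longleftrightarrow> (\<forall>s a. 0 \<le> mu s a) \<and> (\<forall>s. (\<Sum>a\<in>UNIV. mu s a) = 1)"

text \<open>Product A_{pi_k} ... A_{pi_1} for the list [pi_1, ..., pi_k] (pi_1 applied first).\<close>
definition Aprod :: "('s::finite \<Rightarrow> 'a::finite \<Rightarrow> 's \<Rightarrow> real) \<Rightarrow> real \<Rightarrow> real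
    \<Rightarrow> ('s \<Rightarrow> 'a \<Rightarrow> real) \<Rightarrow> ('s \<Rightarrow> 'a \<Rightarrow> real^'m) \<Rightarrow> ('s \<Rightarrow> 'a) list \<Rightarrow> real^'m \<Rightarrow> real^'m" where
  "Aprod P \<gamma> \<alpha> d phi ps = foldr (\<lambda>\<pi> f. f \<circ> Amat P \<gamma> \<alpha> d phi (det_policy \<pi>)) ps id"

definition jsr_dir :: "('s::finite \<Rightarrow> 'a::finite \<Rightarrow> 's \<Rightarrow> real) \<Rightarrow> real \<Rightarrow> real
    \<Rightarrow> ('s \<Rightarrow> 'a \<Rightarrow> real) \<Rightarrow> ('s \<Rightarrow> 'a \<Rightarrow> real^'m) \<Rightarrow> real" where
  "jsr_dir P \<gamma> \<alpha> d phi =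
     lim (\<lambda>k. root (Suc k) (Max ((\<lambda>ps. onorm (Aprod P \<gamma> \<alpha> d phi ps)) ` {ps. length ps = Suc k})))"

definition ghat :: "('s \<Rightarrow> 'a \<Rightarrow> 's \<Rightarrow> real) \<Rightarrow> real \<Rightarrow> ('s \<Rightarrow> 'a::finite \<Rightarrow> real^'m)
    \<Rightarrow> 's \<times> 'a \<times> 's \<Rightarrow> real^'m \<Rightarrow> real^'m" where
  "ghat r \<gamma> phi smp \<theta> = (case smp of (s, a, s') \<Rightarrow>
     (r s a s' + \<gamma> * Vtheta phi \<theta> s' - phi s a \<bullet> \<theta>) *\<^sub>R phi s a)"

primrec theta_iter :: "('s \<Rightarrow> 'a \<Rightarrow> 's \<Rightarrow> real) \<Rightarrow> real \<Rightarrow> real \<Rightarrow> ('s \<Rightarrow> 'a::finite \<Rightarrow> real^'m)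
    \<Rightarrow> real^'m \<Rightarrow> (nat \<Rightarrow> 'w \<Rightarrow> 's \<times> 'a \<times> 's) \<Rightarrow> nat \<Rightarrow> 'w \<Rightarrow> real^'m" where
  "theta_iter r \<gamma> \<alpha> phi \<theta>0 X 0 \<omega> = \<theta>0"
| "theta_iter r \<gamma> \<alpha> phi \<theta>0 X (Suc k) \<omega> =
     theta_iter r \<gamma> \<alpha> phi \<theta>0 X k \<omega> + \<alpha> *\<^sub>R ghat r \<gamma> phi (X k \<omega>) (theta_iter r \<gamma> \<alpha> phi \<theta>0 X k \<omega>)"

text \<open>Filtration F_k = sigma(theta_0, samples up to time k-1); theta_0 is deterministic.\<close>
definition filt :: "'w measure \<Rightarrow> (nat \<Rightarrow> 'w \<Rightarrow> 'b) \<Rightarrow> nat \<Rightarrow> 'w measure" where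
  "filt M X k = sigma (space M) (\<Union>t\<in>{..<k}. {X t -` A \<inter> space M | A. True})"

end

theory Submission
  imports Defs
begin
definition amax :: "('s \<Rightarrow> 'a::finite \<Rightarrow> real^'m) \<Rightarrow> real^'m \<Rightarrow> 's \<Rightarrow> 'a" where
  "amax phi \<theta> s = (SOME a. phi s a \<bullet> \<theta> = Vtheta phi \<theta> s)"

lemma amax: "phi s (amax phi \<theta> s) \<bullet> \<theta> = Vtheta phi \<theta> s"
proof -
  have "Vtheta phi \<theta> s \<in> (\<lambda>a. phi s a \<bullet> \<theta>) ` UNIV"
    unfolding Vtheta_def by (rule Max_in) auto
  then have "\<exists>a. phi s a \<bullet> \<theta> = Vtheta phi \<theta> s" by auto
  then show ?thesis unfolding amax_def by (rule someI_ex)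
qed

lemma V_ge: "phi s a \<bullet> \<theta> \<le> Vtheta phi \<theta> s"
  unfolding Vtheta_def by (rule Max_ge) auto

definition lamf :: "('s \<Rightarrow> 'a::finite \<Rightarrow> real^'m) \<Rightarrow> real^'m \<Rightarrow> real^'m \<Rightarrow> 's \<Rightarrow> real" where
  "lamf phi \<theta>s \<theta> s =
    (if phi s (amax phi \<theta> s) \<bullet> (\<theta> - \<theta>s) = phi s (amax phi \<theta>s s) \<bullet> (\<theta> - \<theta>s) then 1
     else (Vtheta phi \<theta> s - Vtheta phi \<theta>s s - phi s (amax phi \<theta>s s) \<bullet> (\<theta> - \<theta>s))
        / (phi s (amax phi \<theta> s) \<bullet> (\<theta> - \<theta>s) - phi s (amax phi \<theta>s s) \<bullet> (\<theta> - \<theta>s)))"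

definition mufun :: "('s \<Rightarrow> 'a::finite \<Rightarrow> real^'m) \<Rightarrow> real^'m \<Rightarrow> real^'m \<Rightarrow> 's \<Rightarrow> 'a \<Rightarrow> real" where
  "mufun phi \<theta>s \<theta> s u = lamf phi \<theta>s \<theta> s * (if u = amax phi \<theta> s then 1 else 0)
     + (1 - lamf phi \<theta>s \<theta> s) * (if u = amax phi \<theta>s s then 1 else 0)"

lemma lamf_bounds: "0 \<le> lamf phi \<theta>s \<theta> s \<and> lamf phi \<theta>s \<theta> s \<le> 1"
proof -
  let ?hi = "phi s (amax phi \<theta> s) \<bullet> (\<theta> - \<theta>s)"
  let ?lo = "phi s (amax phi \<theta>s s) \<bullet> (\<theta> - \<theta>s)"
  let ?D = "Vtheta phi \<theta> s - Vtheta phi \<theta>s s"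
  have h: "?D \<le> ?hi" using amax[of phi s \<theta>] V_ge[of phi s "amax phi \<theta> s" \<theta>s]
    by (simp add: inner_diff_right)
  have l: "?lo \<le> ?D" using amax[of phi s \<theta>s] V_ge[of phi s "amax phi \<theta>s s" \<theta>]
    by (simp add: inner_diff_right)
  show ?thesis
  proof (cases "?hi = ?lo")
    case True then show ?thesis by (simp add: lamf_def)
  next
    case False
    then have "?hi - ?lo > 0" using h l by simp
    then show ?thesis using h l False by (simp add: lamf_def field_simps)
  qed
qed

lemma mufun_sum: "(\<Sum>u\<in>UNIV. mufun phi \<theta>s \<theta> s u * f u)
   = lamf phi \<theta>s \<theta> s * f (amax phi \<theta> s) + (1 - lamf phi \<theta>s \<theta> s) * f (amax phi \<theta>s s)"
proof -
  have "(\<Sum>u\<in>UNIV. mufun phi \<theta>s \<theta> s u * f u) = (\<Sum>u\<in>UNIV. lamf phi \<theta>s \<theta> s * (if u = amax phi \<theta> s then f u else 0)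
     + (1 - lamf phi \<theta>s \<theta> s) * (if u = amax phi \<theta>s s then f u else 0))"
    unfolding mufun_def by (intro sum.cong refl) (simp add: algebra_simps)
  also have "\<dots> = lamf phi \<theta>s \<theta> s * f (amax phi \<theta> s) + (1 - lamf phi \<theta>s \<theta> s) * f (amax phi \<theta>s s)"
    by (simp add: sum.distrib sum_distrib_left[symmetric])
  finally show ?thesis .
qed

lemma mufun_stoch: "stoch_policy (mufun phi \<theta>s \<theta>)"
  unfolding stoch_policy_def
proof (intro conjI allI)
  fix s a show "0 \<le> mufun phi \<theta>s \<theta> s a"
    using lamf_bounds[of phi \<theta>s \<theta> s] unfolding mufun_def by auto
next
  fix s show "(\<Sum>a\<in>UNIV. mufun phi \<theta>s \<theta> s a) = 1"
    using mufun_sum[of phi \<theta>s \<theta> s "\<lambda>_. 1"] by simp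
qed

lemma aux_lam: "(x::real) = (D - lo) / (hi - lo) \<Longrightarrow> hi \<noteq> lo \<Longrightarrow> x * hi + (1 - x) * lo = D"
  by (simp add: field_simps)

lemma mufun_V: "(\<Sum>u\<in>UNIV. mufun phi \<theta>s \<theta> s u * (phi s u \<bullet> (\<theta> - \<theta>s)))
   = Vtheta phi \<theta> s - Vtheta phi \<theta>s s"
proof -
  let ?hi = "phi s (amax phi \<theta> s) \<bullet> (\<theta> - \<theta>s)"
  let ?lo = "phi s (amax phi \<theta>s s) \<bullet> (\<theta> - \<theta>s)"
  let ?D = "Vtheta phi \<theta> s - Vtheta phi \<theta>s s"
  have h: "?D \<le> ?hi" using amax[of phi s \<theta>] V_ge[of phi s "amax phi \<theta> s" \<theta>s]
    by (simp add: inner_diff_right)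
  have l: "?lo \<le> ?D" using amax[of phi s \<theta>s] V_ge[of phi s "amax phi \<theta>s s" \<theta>]
    by (simp add: inner_diff_right)
  show ?thesis
  proof (cases "?hi = ?lo")
    case True then show ?thesis using h l by (simp add: mufun_sum lamf_def)
  next
    case False
    then have nz: "?hi - ?lo \<noteq> 0" by simp
    have "lamf phi \<theta>s \<theta> s = (?D - ?lo) / (?hi - ?lo)" using False by (simp add: lamf_def)
    from aux_lam[OF this False] show ?thesis by (simp add: mufun_sum)
  qed
qed

lemma gbar_diff:
  "gbar P r \<gamma> d phi \<theta> - gbar P r \<gamma> d phi \<theta>s =
   \<gamma> *\<^sub>R (\<Sum>s\<in>UNIV. \<Sum>a\<in>UNIV. (d s a * (\<Sum>s'\<in>UNIV. P s a s' * (Vtheta phi \<theta> s' - Vtheta phi \<theta>s s'))) *\<^sub>R phi s a)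
   - (\<Sum>s\<in>UNIV. \<Sum>a\<in>UNIV. (d s a * (phi s a \<bullet> (\<theta> - \<theta>s))) *\<^sub>R phi s a)"
  unfolding gbar_def scaleR_sum_right sum_subtractf[symmetric]
  by (intro sum.cong refl) (simp add: algebra_simps sum_subtractf inner_diff_right sum_distrib_left)

lemma Amat_eq:
  assumes "\<And>s. (\<Sum>u\<in>UNIV. mu s u * (phi s u \<bullet> (\<theta> - \<theta>s))) = Vtheta phi \<theta> s - Vtheta phi \<theta>s s"
  shows "Amat P \<gamma> \<alpha> d phi mu (\<theta> - \<theta>s) = (\<theta> - \<theta>s) + \<alpha> *\<^sub>R (gbar P r \<gamma> d phi \<theta> - gbar P r \<gamma> d phi \<theta>s)"
  unfolding Amat_def gbar_diff assms by (simp add: algebra_simps)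

lemma sum_UNIV_triple:
  "(\<Sum>x\<in>(UNIV::('s::finite \<times> 'a::finite \<times> 's) set). g x) = (\<Sum>s\<in>UNIV. \<Sum>a\<in>UNIV. \<Sum>s'\<in>UNIV. g (s, a, s'))"
  by (simp add: sum.cartesian_product UNIV_Times_UNIV[symmetric] del: UNIV_Times_UNIV)

lemma ghat_avg:
  fixes P :: "'s::finite \<Rightarrow> 'a::finite \<Rightarrow> 's \<Rightarrow> real"
  assumes P_sum: "\<And>s a. (\<Sum>s'\<in>UNIV. P s a s') = 1"
  shows "(\<Sum>x\<in>UNIV. (case x of (s, a, s') \<Rightarrow> d s a * P s a s') *\<^sub>R ghat r \<gamma> phi x \<theta>) = gbar P r \<gamma> d phi \<theta>"
  unfolding sum_UNIV_triple gbar_def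
proof (intro sum.cong refl)
  fix s a
  have "(\<Sum>s'\<in>UNIV. (d s a * P s a s') *\<^sub>R ghat r \<gamma> phi (s, a, s') \<theta>)
      = (\<Sum>s'\<in>UNIV. d s a * (P s a s' * r s a s') + d s a * \<gamma> * (P s a s' * Vtheta phi \<theta> s') - d s a * (phi s a \<bullet> \<theta>) * P s a s') *\<^sub>R phi s a"
    unfolding ghat_def scaleR_sum_left by (intro sum.cong refl) (simp add: algebra_simps)
  also have "\<dots> = (d s a * (Rexp P r s a + \<gamma> * (\<Sum>s'\<in>UNIV. P s a s' * Vtheta phi \<theta> s') - phi s a \<bullet> \<theta>)) *\<^sub>R phi s a"
    using P_sum[of s a] by (simp add: sum_subtractf sum.distrib sum_distrib_left[symmetric] sum_distrib_right[symmetric] Rexp_def algebra_simps)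
  finally show "(\<Sum>s'\<in>UNIV. (case (s, a, s') of (s, a, s') \<Rightarrow> d s a * P s a s') *\<^sub>R ghat r \<gamma> phi (s, a, s') \<theta>) = (d s a * (Rexp P r s a + \<gamma> * (\<Sum>s'\<in>UNIV. P s a s' * Vtheta phi \<theta> s') - phi s a \<bullet> \<theta>)) *\<^sub>R phi s a"
    by simp
qed

lemma p_sum:
  fixes P :: "'s::finite \<Rightarrow> 'a::finite \<Rightarrow> 's \<Rightarrow> real"
  assumes P_sum: "\<And>s a. (\<Sum>s'\<in>UNIV. P s a s') = 1"
    and d_sum: "(\<Sum>s\<in>UNIV. \<Sum>a\<in>UNIV. d s a) = 1"
  shows "(\<Sum>x\<in>UNIV. (case x of (s, a, s') \<Rightarrow> d s a * P s a s')) = 1"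
  unfolding sum_UNIV_triple by (simp add: sum_distrib_left[symmetric] P_sum d_sum)

lemma inner_zero:
  fixes P :: "'s::finite \<Rightarrow> 'a::finite \<Rightarrow> 's \<Rightarrow> real"
  assumes P_sum: "\<And>s a. (\<Sum>s'\<in>UNIV. P s a s') = 1"
    and d_sum: "(\<Sum>s\<in>UNIV. \<Sum>a\<in>UNIV. d s a) = 1"
  shows "(\<Sum>x\<in>UNIV. (ghat r \<gamma> phi x \<theta> - gbar P r \<gamma> d phi \<theta>) $ i * (case x of (s, a, s') \<Rightarrow> d s a * P s a s')) = 0"
proof -
  let ?p = "\<lambda>x. case x of (s, a, s') \<Rightarrow> d s a * P s a s'"
  have "(\<Sum>x\<in>UNIV. ?p x *\<^sub>R (ghat r \<gamma> phi x \<theta> - gbar P r \<gamma> d phi \<theta>)) = 0"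
    by (simp add: scaleR_diff_right sum_subtractf ghat_avg[OF P_sum] scaleR_sum_left[symmetric] p_sum[OF P_sum d_sum])
  then have "(\<Sum>x\<in>UNIV. ?p x *\<^sub>R (ghat r \<gamma> phi x \<theta> - gbar P r \<gamma> d phi \<theta>)) $ i = 0" by simp
  then show ?thesis by (simp add: sum_component mult.commute)
qed

theorem proposition2:
  fixes P :: "'s::finite \<Rightarrow> 'a::finite \<Rightarrow> 's \<Rightarrow> real"
    and r :: "'s \<Rightarrow> 'a \<Rightarrow> 's \<Rightarrow> real"
    and d :: "'s \<Rightarrow> 'a \<Rightarrow> real"
    and phi :: "'s \<Rightarrow> 'a \<Rightarrow> real^'m"
    and \<gamma> \<alpha> :: real
    and \<theta>0 \<theta>s :: "real^'m"
    and M :: "'w measure"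
    and X :: "nat \<Rightarrow> 'w \<Rightarrow> 's \<times> 'a \<times> 's"
  assumes P_nonneg: "\<And>s a s'. 0 \<le> P s a s'"
    and P_sum: "\<And>s a. (\<Sum>s'\<in>UNIV. P s a s') = 1"
    and gamma: "0 < \<gamma>" "\<gamma> < 1"
    and alpha: "0 < \<alpha>" "\<alpha> < 1"
    and d_pos: "\<And>s a. 0 < d s a"
    and d_sum: "(\<Sum>s\<in>UNIV. \<Sum>a\<in>UNIV. d s a) = 1"
    and full_rank: "\<And>\<theta>. (\<forall>s a. phi s a \<bullet> \<theta> = 0) \<Longrightarrow> \<theta> = 0"
    and jsr: "jsr_dir P \<gamma> \<alpha> d phi < 1"
    and fixpt: "gbar P r \<gamma> d phi \<theta>s = 0"
    and M: "prob_space M"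
    and X_meas: "\<And>k. X k \<in> measurable M (count_space UNIV)"
    and X_indep: "prob_space.indep_vars M (\<lambda>_. count_space UNIV) X UNIV"
    and X_distr: "\<And>k s a s'. measure M {\<omega> \<in> space M. X k \<omega> = (s, a, s')} = d s a * P s a s'"
  shows "\<exists>mu :: nat \<Rightarrow> 'w \<Rightarrow> 's \<Rightarrow> 'a \<Rightarrow> real.
           (\<forall>k. \<forall>\<omega>\<in>space M. stoch_policy (mu k \<omega>))
         \<and> (\<forall>k s a. (\<lambda>\<omega>. mu k \<omega> s a) \<in> borel_measurable (filt M X k))
         \<and> (\<forall>k. \<forall>\<omega>\<in>space M.
              theta_iter r \<gamma> \<alpha> phi \<theta>0 X (Suc k) \<omega> - \<theta>s
                = Amat P \<gamma> \<alpha> d phi (mu k \<omega>) (theta_iter r \<gamma> \<alpha> phi \<theta>0 X k \<omega> - \<theta>s)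
                  + \<alpha> *\<^sub>R (ghat r \<gamma> phi (X k \<omega>) (theta_iter r \<gamma> \<alpha> phi \<theta>0 X k \<omega>)
                          - gbar P r \<gamma> d phi (theta_iter r \<gamma> \<alpha> phi \<theta>0 X k \<omega>)))
         \<and> (\<forall>k i. AE \<omega> in M. real_cond_exp M (filt M X k)
              (\<lambda>\<omega>. (ghat r \<gamma> phi (X k \<omega>) (theta_iter r \<gamma> \<alpha> phi \<theta>0 X k \<omega>)
                     - gbar P r \<gamma> d phi (theta_iter r \<gamma> \<alpha> phi \<theta>0 X k \<omega>)) $ i) \<omega> = 0)"
proof -
  interpret prob_space M by (rule M)
  define thl where "thl = (\<lambda>xs. foldl (\<lambda>\<theta> x. \<theta> + \<alpha> *\<^sub>R ghat r \<gamma> phi x \<theta>) \<theta>0 xs)"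
  define L where "L = (\<lambda>k \<omega>. map (\<lambda>t. X t \<omega>) [0..<k])"
  have th_eq: "theta_iter r \<gamma> \<alpha> phi \<theta>0 X k \<omega> = thl (L k \<omega>)" for k \<omega>
    by (induction k) (simp_all add: thl_def L_def)
  define E where "E = (\<lambda>t. {X t -` A \<inter> space M | A. True})"
  have sets_filt: "sets (filt M X k) = sigma_sets (space M) (\<Union>t\<in>{..<k}. E t)" for k
    unfolding filt_def E_def by (rule sets_measure_of) auto
  have space_filt: "space (filt M X k) = space M" for k
    unfolding filt_def by (rule space_measure_of) auto
  have Xpre: "X t -` B \<inter> space M \<in> sets M" for t B
    using measurable_sets[OF X_meas[of t], of B] by simp
  have filt_sub: "sets (filt M X k) \<subseteq> sets M" for k
    unfolding sets_filt by (rule sets.sigma_sets_subset) (auto simp: E_def Xpre)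
  have top_filt: "space M \<in> sets (filt M X n)" for n
    using sets.top[of "filt M X n"] space_filt by simp
  have Lpre: "L k -` {l} \<inter> space M \<in> sets (filt M X n)" if "k \<le> n" for k n l
    using that
  proof (induction k arbitrary: l)
    case 0
    then show ?case using top_filt by (cases "l = []") (auto simp: L_def)
  next
    case (Suc k)
    have eq: "L (Suc k) -` {l} \<inter> space M = (if l = [] then {} else
      (L k -` {butlast l} \<inter> space M) \<inter> (X k -` {last l} \<inter> space M))"
      by (auto simp: L_def snoc_eq_iff_butlast)
    have "X k -` {last l} \<inter> space M \<in> sets (filt M X n)"
      unfolding sets_filt using Suc.prems by (intro sigma_sets.Basic) (auto simp: E_def intro!: bexI[of _ k])
    then show ?case unfolding eq using Suc by auto
  qed
  have L_meas: "L k \<in> measurable (filt M X k) (count_space UNIV)" for k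
    by (subst measurable_count_space_eq2_countable) (auto simp: space_filt Lpre)
  have L_measM: "L k \<in> measurable M (count_space UNIV)" for k
    by (subst measurable_count_space_eq2_countable) (use Lpre filt_sub in blast)
  define mu where "mu = (\<lambda>k \<omega>. mufun phi \<theta>s (theta_iter r \<gamma> \<alpha> phi \<theta>0 X k \<omega>))"
  show ?thesis
  proof (intro exI[of _ mu] conjI allI ballI)
    fix k \<omega> show "stoch_policy (mu k \<omega>)" unfolding mu_def by (rule mufun_stoch)
  next
    fix k s a
    show "(\<lambda>\<omega>. mu k \<omega> s a) \<in> borel_measurable (filt M X k)"
      unfolding mu_def th_eq
      using measurable_compose[OF L_meas, of "\<lambda>l. mufun phi \<theta>s (thl l) s a" borel] by simp
  next
    fix k \<omega>
    let ?t = "theta_iter r \<gamma> \<alpha> phi \<theta>0 X k \<omega>"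
    have A: "Amat P \<gamma> \<alpha> d phi (mu k \<omega>) (?t - \<theta>s) = (?t - \<theta>s) + \<alpha> *\<^sub>R (gbar P r \<gamma> d phi ?t - gbar P r \<gamma> d phi \<theta>s)"
      unfolding mu_def by (rule Amat_eq) (rule mufun_V)
    show "theta_iter r \<gamma> \<alpha> phi \<theta>0 X (Suc k) \<omega> - \<theta>s =
       Amat P \<gamma> \<alpha> d phi (mu k \<omega>) (?t - \<theta>s) +
       \<alpha> *\<^sub>R (ghat r \<gamma> phi (X k \<omega>) ?t - gbar P r \<gamma> d phi ?t)"
      unfolding A fixpt by (simp add: algebra_simps)
  next
    fix k i
    interpret S: finite_measure_subalgebra M "filt M X k"
      by unfold_locales (auto simp: subalgebra_def space_filt filt_sub)
    define c where "c = (\<lambda>l x. (ghat r \<gamma> phi x (thl l) - gbar P r \<gamma> d phi (thl l)) $ i)"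
    define f where "f = (\<lambda>\<omega>. c (L k \<omega>) (X k \<omega>))"
    have f_eq: "(\<lambda>\<omega>. (ghat r \<gamma> phi (X k \<omega>) (theta_iter r \<gamma> \<alpha> phi \<theta>0 X k \<omega>)
                     - gbar P r \<gamma> d phi (theta_iter r \<gamma> \<alpha> phi \<theta>0 X k \<omega>)) $ i) = f"
      by (simp add: f_def c_def th_eq)
    define Sk where "Sk = {l::('s\<times>'a\<times>'s) list. length l = k}"
    have finSk: "finite Sk" using finite_lists_length_eq[of "UNIV::('s\<times>'a\<times>'s) set" k] by (simp add: Sk_def)
    have LSk: "L k \<omega> \<in> Sk" for \<omega> by (simp add: Sk_def L_def)
    define S2 where "S2 = {l::('s\<times>'a\<times>'s) list. length l = Suc k}"
    have finS2: "finite S2" using finite_lists_length_eq[of "UNIV::('s\<times>'a\<times>'s) set" "Suc k"] by (simp add: S2_def)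
    define g where "g = (\<lambda>l. c (butlast l) (last l))"
    have f_alt: "f = (\<lambda>\<omega>. g (L (Suc k) \<omega>))" by (simp add: f_def g_def L_def)
    have f_meas: "f \<in> borel_measurable M"
      unfolding f_alt using measurable_compose[OF L_measM, of g borel] by simp
    have f_int: "integrable M f"
    proof (rule integrable_const_bound[where B="\<Sum>l\<in>S2. \<bar>g l\<bar>"])
      show "AE \<omega> in M. norm (f \<omega>) \<le> (\<Sum>l\<in>S2. \<bar>g l\<bar>)"
      proof (intro AE_I2)
        fix \<omega>
        have "\<bar>g (L (Suc k) \<omega>)\<bar> \<le> (\<Sum>l\<in>S2. \<bar>g l\<bar>)"
          using finS2 by (intro member_le_sum) (auto simp: S2_def L_def)
        then show "norm (f \<omega>) \<le> (\<Sum>l\<in>S2. \<bar>g l\<bar>)" by (simp add: f_alt)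
      qed
    qed (rule f_meas)
    have IS: "Int_stable (E t)" for t
      unfolding Int_stable_def E_def
    proof (safe)
      fix A B
      show "\<exists>C. X t -` A \<inter> space M \<inter> (X t -` B \<inter> space M) = X t -` C \<inter> space M \<and> True"
        by (rule exI[of _ "A \<inter> B"]) auto
    qed
    have iv: "indep_sets E UNIV"
      using X_indep unfolding indep_vars_def2 E_def by simp
    have ind2: "indep_sets (\<lambda>j. sigma_sets (space M) (\<Union>t\<in>(if j then {..<k} else {k}). E t)) (UNIV::bool set)"
      by (rule indep_sets_collect_sigma) (auto intro: indep_sets_mono_index[OF _ iv] simp: IS disjoint_family_on_def)
    have indep: "prob (A' \<inter> (X k -` {x} \<inter> space M)) = prob A' * prob (X k -` {x} \<inter> space M)"
      if A': "A' \<in> sets (filt M X k)" for A' x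
    proof -
      let ?B = "X k -` {x} \<inter> space M"
      have mem: "\<forall>j\<in>UNIV. (if j then A' else ?B) \<in> sigma_sets (space M) (\<Union>t\<in>(if j then {..<k} else {k}). E t)"
      proof
        fix j :: bool show "(if j then A' else ?B) \<in> sigma_sets (space M) (\<Union>t\<in>(if j then {..<k} else {k}). E t)"
        proof (cases j)
          case True then show ?thesis using A' sets_filt[of k] by simp
        next
          case False then show ?thesis by (auto simp: E_def intro!: sigma_sets.Basic)
        qed
      qed
      have "prob (\<Inter>j\<in>UNIV. if j then A' else ?B) = (\<Prod>j\<in>UNIV. prob (if j then A' else ?B))"
        by (rule indep_setsD[OF ind2]) (use mem in auto)
      then show ?thesis by (simp add: UNIV_bool Int_commute mult.commute)
    qed
    have main: "(\<integral>\<omega>\<in>A. f \<omega> \<partial>M) = 0" if A: "A \<in> sets (filt M X k)" for A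
    proof -
      define EL where "EL = (\<lambda>l. L k -` {l} \<inter> space M)"
      define BX where "BX = (\<lambda>x. X k -` {x} \<inter> space M)"
      have ELf: "A \<inter> EL l \<in> sets (filt M X k)" for l
        using A Lpre[of k k l] by (auto simp: EL_def)
      have setsM: "A \<inter> EL l \<inter> BX x \<in> sets M" for l x
        using ELf[of l] filt_sub Xpre[of k "{x}"] by (auto simp: BX_def)
      have intg: "integrable M (\<lambda>\<omega>. c l x * indicator (A \<inter> EL l \<inter> BX x) \<omega>)" for l x
        by (intro integrable_mult_right integrable_real_indicator setsM) (simp add: less_top[symmetric])
      have pt: "indicator A \<omega> * f \<omega> = (\<Sum>l\<in>Sk. \<Sum>x\<in>UNIV. c l x * indicator (A \<inter> EL l \<inter> BX x) \<omega>)"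
        if "\<omega> \<in> space M" for \<omega>
      proof -
        have ix: "indicator (A \<inter> EL l \<inter> BX x) \<omega> = (if l = L k \<omega> then if x = X k \<omega> then indicator A \<omega> else 0 else (0::real))" for l x
          using that by (auto simp: indicator_def EL_def BX_def)
        have inner: "(\<Sum>x\<in>UNIV. c l x * indicator (A \<inter> EL l \<inter> BX x) \<omega>) = (if l = L k \<omega> then c l (X k \<omega>) * indicator A \<omega> else 0)" for l
        proof -
          have md: "(y::real) * (if P then z else 0) = (if P then y * z else 0)" for y z P by simp
          show ?thesis by (cases "l = L k \<omega>") (simp_all add: ix md)
        qed
        show ?thesis unfolding inner using LSk[of \<omega>] finSk by (simp add: sum.delta' f_def)
      qed
      have indepB: "prob (A \<inter> EL l \<inter> BX x) = prob (A \<inter> EL l) * prob (BX x)" for l x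
        unfolding BX_def by (rule indep[OF ELf])
      have pBX: "prob (BX x) = (case x of (s, a, s') \<Rightarrow> d s a * P s a s')" for x
      proof (cases x)
        case (fields s a s')
        have "BX x = {\<omega> \<in> space M. X k \<omega> = (s, a, s')}" by (auto simp: BX_def fields)
        then show ?thesis using X_distr[of k s a s'] by (simp add: fields)
      qed
      have "(\<integral>\<omega>\<in>A. f \<omega> \<partial>M) = (\<integral>\<omega>. (\<Sum>l\<in>Sk. \<Sum>x\<in>UNIV. c l x * indicator (A \<inter> EL l \<inter> BX x) \<omega>) \<partial>M)"
        unfolding set_lebesgue_integral_def by (rule Bochner_Integration.integral_cong) (simp_all add: pt)
      also have "\<dots> = (\<Sum>l\<in>Sk. (\<integral>\<omega>. (\<Sum>x\<in>UNIV. c l x * indicator (A \<inter> EL l \<inter> BX x) \<omega>) \<partial>M))"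
        by (rule Bochner_Integration.integral_sum) (rule Bochner_Integration.integrable_sum, rule intg)
      also have "\<dots> = (\<Sum>l\<in>Sk. \<Sum>x\<in>UNIV. (\<integral>\<omega>. c l x * indicator (A \<inter> EL l \<inter> BX x) \<omega> \<partial>M))"
        by (intro sum.cong refl Bochner_Integration.integral_sum intg)
      also have "\<dots> = (\<Sum>l\<in>Sk. \<Sum>x\<in>UNIV. c l x * prob (A \<inter> EL l \<inter> BX x))"
      proof (intro sum.cong refl)
        fix l x
        have "A \<inter> EL l \<inter> BX x \<inter> space M = A \<inter> EL l \<inter> BX x"
          using sets.sets_into_space[OF setsM[of l x]] by blast
        then show "(\<integral>\<omega>. c l x * indicator (A \<inter> EL l \<inter> BX x) \<omega> \<partial>M) = c l x * prob (A \<inter> EL l \<inter> BX x)"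
          by (simp only: integral_mult_right_zero Bochner_Integration.integral_indicator)
      qed
      also have "\<dots> = (\<Sum>l\<in>Sk. prob (A \<inter> EL l) * (\<Sum>x\<in>UNIV. c l x * (case x of (s, a, s') \<Rightarrow> d s a * P s a s')))"
        unfolding sum_distrib_left
        by (intro sum.cong refl) (simp add: indepB pBX)
      also have "\<dots> = 0"
        unfolding c_def using inner_zero[where P=P and d=d and r=r and \<gamma>=\<gamma> and phi=phi and i=i, OF P_sum d_sum] by simp
      finally show ?thesis .
    qed
    have "AE \<omega> in M. real_cond_exp M (filt M X k) f \<omega> = (\<lambda>_. 0::real) \<omega>"
      by (rule S.real_cond_exp_charact) (auto simp: main f_int)
    then show "AE \<omega> in M. real_cond_exp M (filt M X k)
              (\<lambda>\<omega>. (ghat r \<gamma> phi (X k \<omega>) (theta_iter r \<gamma> \<alpha> phi \<theta>0 X k \<omega>)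
                     - gbar P r \<gamma> d phi (theta_iter r \<gamma> \<alpha> phi \<theta>0 X k \<omega>)) $ i) \<omega> = 0"
      unfolding f_eq by simp
  qed
qed

end
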